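(* Let $T$ be a Galton–Watson tree with finite alphabet $\mathbb{A}$ and offspring distribution $W$, and let $\mathscr{A}$ be a nonempty collection of nonempty subsets of $\mathbb{A}$. Define $g_{\mathscr{A}}:[0,1]\to[0,1]$ by $g_{\mathscr{A}}(s)=\mathbb{P}(W^{(s)}\notin\overline{\mathscr{A}})$ and $\tau(\mathscr{A})=\mathbb{P}(T\text{ has an }\mathscr{A}\text{-subtree})$. Then $1-\tau(\mathscr{A})$ is the smallest fixed point of $g_{\mathscr{A}}$ in $[0,1]$.
   Context: Trees with alphabet $\mathbb{A}$ are prefix-closed subsets of $\mathbb{A}^*$ containing the empty word; for $a\in T$, $W_T(a)=\{i\in\mathbb{A}: ai\in T\}$. The Galton–Watson tree with offspring distribution $W$ (a random subset of $\mathbb{A}$ with $\mathbb{P}(i\in W)>0$ for all $i$) is $T_0=\{\emptyset\}$, $T_n=\{aj:a\in T_{n-1},j\in W_a\}$, $(W_a)$ independent copies of $W$. An $\mathscr{A}$-subtree of $T$ is a tree $S\subseteq T$ with $W_S(a)\in\mathscr{A}$ for all $a\in S$. $\overline{\mathscr{A}}=\{S\subseteq\mathbb{A}:\exists X\in\mathscr{A},\ X\subseteq S\}$. For a random subset $X$ of a finite set $A$ and $s\in[0,1]$, $X^{(s)}=X\cap Y$ where $Y$ is independent of $X$ and $Y\sim\mathrm{Bin}(A,1-s)$, i.e. $\mathbb{P}(Y=B)=(1-s)^{|B|}s^{|A\setminus B|}$ for $B\subseteq A$. *)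

theory Defs
  imports "HOL-Probability.Probability"
begin

text \<open>Alphabet: a finite type 'a (the alphabet is UNIV :: 'a set). Words are lists.\<close>

definition is_tree :: "'a list set \<Rightarrow> bool" where
  "is_tree S \<longleftrightarrow> [] \<in> S \<and> (\<forall>a b. a @ b \<in> S \<longrightarrow> a \<in> S)"

definition children :: "'a list set \<Rightarrow> 'a list \<Rightarrow> 'a set" where
  "children T a = {i. a @ [i] \<in> T}"

definition is_subtree_in :: "'a set set \<Rightarrow> 'a list set \<Rightarrow> 'a list set \<Rightarrow> bool" where
  "is_subtree_in \<A> S T \<longleftrightarrow> is_tree S \<and> S \<subseteq> T \<and> (\<forall>a\<in>S. children S a \<in> \<A>)"

definition upclosure :: "'a set set \<Rightarrow> 'a set set" where
  "upclosure \<A> = {S. \<exists>X\<in>\<A>. X \<subseteq> S}"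

definition bin_subset :: "'a set \<Rightarrow> real \<Rightarrow> 'a set pmf" where
  "bin_subset A p = map_pmf (\<lambda>f. {i\<in>A. f i}) (Pi_pmf A False (\<lambda>_. bernoulli_pmf p))"

definition thinned :: "'a::finite set pmf \<Rightarrow> real \<Rightarrow> 'a set pmf" where
  "thinned W s = do { X \<leftarrow> W; Y \<leftarrow> bin_subset UNIV (1 - s); return_pmf (X \<inter> Y) }"

definition g_fun :: "'a::finite set pmf \<Rightarrow> 'a set set \<Rightarrow> real \<Rightarrow> real" where
  "g_fun W \<A> s = measure_pmf.prob (thinned W s) {S. S \<notin> upclosure \<A>}"

fun gw_gen :: "('a list \<Rightarrow> 'a set) \<Rightarrow> nat \<Rightarrow> 'a list set" where
  "gw_gen \<omega> 0 = {[]}"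
| "gw_gen \<omega> (Suc n) = {a @ [j] | a j. a \<in> gw_gen \<omega> n \<and> j \<in> \<omega> a}"

definition gw_tree :: "('a list \<Rightarrow> 'a set) \<Rightarrow> 'a list set" where
  "gw_tree \<omega> = (\<Union>n. gw_gen \<omega> n)"

text \<open>Probability space of i.i.d. offspring sets (W_a), a ranging over all words.\<close>
definition gw_space :: "'a set pmf \<Rightarrow> ('a list \<Rightarrow> 'a set) measure" where
  "gw_space W = PiM UNIV (\<lambda>_. measure_pmf W)"

definition tau :: "'a set pmf \<Rightarrow> 'a set set \<Rightarrow> real" where
  "tau W \<A> = measure (gw_space W)
      {\<omega> \<in> space (gw_space W). \<exists>S. is_subtree_in \<A> S (gw_tree \<omega>)}"

end

theory Submission
  imports Defs
begin

lemma gw_gen_iff: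
  "w \<in> gw_gen \<omega> n \<longleftrightarrow> length w = n \<and> (\<forall>k<n. w!k \<in> \<omega> (take k w))"
proof (induction n arbitrary: w)
  case 0
  then show ?case by auto
next
  case (Suc n)
  show ?case
  proof
    assume "w \<in> gw_gen \<omega> (Suc n)"
    then obtain a j where w: "w = a @ [j]" "a \<in> gw_gen \<omega> n" "j \<in> \<omega> a" by auto
    with Suc have la: "length a = n" "\<forall>k<n. a!k \<in> \<omega> (take k a)" by auto
    show "length w = Suc n \<and> (\<forall>k<Suc n. w!k \<in> \<omega> (take k w))"
    proof (intro conjI allI impI)
      fix k assume "k < Suc n"
      then show "w!k \<in> \<omega> (take k w)" using w la
        by (cases "k < n") (auto simp: nth_append less_Suc_eq)
    qed (use w la in auto)
  next
    assume H: "length w = Suc n \<and> (\<forall>k<Suc n. w!k \<in> \<omega> (take k w))"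
    then obtain a j where w: "w = a @ [j]"
      by (metis Zero_not_Suc length_0_conv rev_exhaust)
    with H have la: "length a = n" by auto
    have "a \<in> gw_gen \<omega> n"
      unfolding Suc.IH
    proof (intro conjI allI impI)
      fix k assume k: "k < n"
      have "w!k = a!k" using k la w by (simp add: nth_append)
      moreover have "take k w = take k a" using k la w by simp
      ultimately show "a!k \<in> \<omega> (take k a)" using H k less_SucI by metis
    qed (rule la)
    moreover have "j \<in> \<omega> a"
    proof -
      have "w!n = j" using w la by (simp add: nth_append)
      moreover have "take n w = a" using w la by simp
      ultimately show ?thesis using H by auto
    qed
    ultimately show "w \<in> gw_gen \<omega> (Suc n)" using w by auto
  qed
qed

lemma gw_tree_iff: "w \<in> gw_tree \<omega> \<longleftrightarrow> (\<forall>k<length w. w!k \<in> \<omega> (take k w))"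
  unfolding gw_tree_def by (simp add: gw_gen_iff)

lemma gw_tree_snocD:
  assumes "a @ [i] \<in> gw_tree \<omega>"
  shows "a \<in> gw_tree \<omega>" "i \<in> \<omega> a"
proof -
  have H0: "\<forall>k<length (a@[i]). (a@[i])!k \<in> \<omega> (take k (a@[i]))"
    using assms unfolding gw_tree_iff .
  have H: "(a@[i])!k \<in> \<omega> (take k (a@[i]))" if "k < Suc (length a)" for k
  proof -
    have "k < length (a@[i])" using that by simp
    then show ?thesis using H0 by blast
  qed
  show "a \<in> gw_tree \<omega>" unfolding gw_tree_iff
  proof (intro allI impI)
    fix k assume k: "k < length a"
    have "(a@[i])!k = a!k" using k by (simp add: nth_append)
    moreover have "take k (a@[i]) = take k a" using k by simp
    ultimately show "a!k \<in> \<omega> (take k a)" using H[of k] k by simp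
  qed
  show "i \<in> \<omega> a" using H[of "length a"] by simp
qed

lemma gw_tree_snoc:
  assumes "a \<in> gw_tree \<omega>"
  shows "a @ [i] \<in> gw_tree \<omega> \<longleftrightarrow> i \<in> \<omega> a"
proof
  assume "i \<in> \<omega> a"
  show "a @ [i] \<in> gw_tree \<omega>" unfolding gw_tree_iff
  proof (intro allI impI)
    fix k assume k: "k < length (a @ [i])"
    show "(a @ [i]) ! k \<in> \<omega> (take k (a @ [i]))"
    proof (cases "k < length a")
      case True
      then have "(a@[i])!k = a!k" "take k (a@[i]) = take k a" by (simp_all add: nth_append)
      moreover have "\<forall>k<length a. a!k \<in> \<omega> (take k a)" using assms unfolding gw_tree_iff .
      ultimately show ?thesis using True by metis
    next
      case False
      then have "k = length a" using k by simp
      then show ?thesis using \<open>i \<in> \<omega> a\<close> by simp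
    qed
  qed
next
  assume "a @ [i] \<in> gw_tree \<omega>"
  then show "i \<in> \<omega> a" by (rule gw_tree_snocD(2))
qed

lemma gw_tree_Nil: "[] \<in> gw_tree \<omega>"
  unfolding gw_tree_iff by simp

lemma gw_tree_is_tree: "is_tree (gw_tree \<omega>)"
  unfolding is_tree_def
proof (intro conjI allI impI)
  show "[] \<in> gw_tree \<omega>" by (rule gw_tree_Nil)
next
  fix a b assume "a @ b \<in> gw_tree \<omega>"
  then show "a \<in> gw_tree \<omega>"
  proof (induction b rule: rev_induct)
    case Nil then show ?case by simp
  next
    case (snoc x xs)
    then show ?case using gw_tree_snocD(1)[of "a @ xs" x] by simp
  qed
qed


fun good :: "'a set set \<Rightarrow> nat \<Rightarrow> ('a list \<Rightarrow> 'a set) \<Rightarrow> bool" where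
  "good \<A> 0 \<omega> = True"
| "good \<A> (Suc n) \<omega> = ({i \<in> \<omega> []. good \<A> n (\<lambda>b. \<omega> (i # b))} \<in> upclosure \<A>)"

lemma upclosure_mono: "X \<in> upclosure \<A> \<Longrightarrow> X \<subseteq> Y \<Longrightarrow> Y \<in> upclosure \<A>"
  unfolding upclosure_def by auto

lemma upclosure_I: "X \<in> \<A> \<Longrightarrow> X \<subseteq> Y \<Longrightarrow> Y \<in> upclosure \<A>"
  unfolding upclosure_def by auto

lemma good_local:
  "(\<And>w. length w < n \<Longrightarrow> \<omega> w = \<omega>' w) \<Longrightarrow> good \<A> n \<omega> = good \<A> n \<omega>'"
proof (induction n arbitrary: \<omega> \<omega>')
  case 0
  then show ?case by simp
next
  case (Suc n)
  have e: "\<omega> [] = \<omega>' []" using Suc.prems by simp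
  have "good \<A> n (\<lambda>b. \<omega> (i # b)) = good \<A> n (\<lambda>b. \<omega>' (i # b))" for i
    by (rule Suc.IH) (use Suc.prems in simp)
  then show ?case using e by simp
qed

lemma good_Suc_imp: "good \<A> (Suc n) \<omega> \<Longrightarrow> good \<A> n \<omega>"
proof (induction n arbitrary: \<omega>)
  case 0
  then show ?case by simp
next
  case (Suc n)
  have "{i \<in> \<omega> []. good \<A> (Suc n) (\<lambda>b. \<omega> (i # b))} \<subseteq> {i \<in> \<omega> []. good \<A> n (\<lambda>b. \<omega> (i # b))}"
    using Suc.IH by blast
  then show ?case using Suc.prems upclosure_mono by simp
qed

lemma good_mono_le: "m \<le> n \<Longrightarrow> good \<A> n \<omega> \<Longrightarrow> good \<A> m \<omega>"
proof (induction n rule: dec_induct)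
  case base then show ?case by simp
next
  case (step k) then show ?case using good_Suc_imp by blast
qed

lemma subtree_good:
  assumes S: "is_subtree_in \<A> S (gw_tree \<omega>)"
  shows "a \<in> S \<Longrightarrow> good \<A> n (\<lambda>b. \<omega> (a @ b))"
proof (induction n arbitrary: a)
  case 0 then show ?case by simp
next
  case (Suc n)
  have ch: "children S a \<in> \<A>" using S Suc.prems unfolding is_subtree_in_def by blast
  have "children S a \<subseteq> {i \<in> \<omega> (a @ []). good \<A> n (\<lambda>b. \<omega> (a @ i # b))}"
  proof
    fix i assume i: "i \<in> children S a"
    then have ai: "a @ [i] \<in> S" unfolding children_def by simp
    then have "a @ [i] \<in> gw_tree \<omega>" using S unfolding is_subtree_in_def by blast
    then have "i \<in> \<omega> a" by (rule gw_tree_snocD(2))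
    moreover have "good \<A> n (\<lambda>b. \<omega> ((a @ [i]) @ b))" using Suc.IH[OF ai] .
    ultimately show "i \<in> {i \<in> \<omega> (a @ []). good \<A> n (\<lambda>b. \<omega> (a @ i # b))}" by simp
  qed
  then show ?case using upclosure_I[OF ch] by simp
qed

lemma good_all_step:
  fixes \<omega> :: "'a::finite list \<Rightarrow> 'a set"
  assumes all: "\<forall>n. good \<A> n \<omega>"
  shows "{i \<in> \<omega> []. \<forall>n. good \<A> n (\<lambda>b. \<omega> (i # b))} \<in> upclosure \<A>"
proof -
  define N' where "N' i = (if \<forall>n. good \<A> n (\<lambda>b. \<omega> (i # b)) then 0
       else (LEAST n. \<not> good \<A> n (\<lambda>b. \<omega> (i # b))))" for i
  define N where "N = (\<Sum>i\<in>UNIV. N' i)"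
  have le: "N' i \<le> N" for i
    unfolding N_def by (rule member_le_sum) auto
  have sub: "{i \<in> \<omega> []. good \<A> N (\<lambda>b. \<omega> (i # b))} \<subseteq> {i \<in> \<omega> []. \<forall>n. good \<A> n (\<lambda>b. \<omega> (i # b))}"
  proof
    fix i assume i: "i \<in> {i \<in> \<omega> []. good \<A> N (\<lambda>b. \<omega> (i # b))}"
    show "i \<in> {i \<in> \<omega> []. \<forall>n. good \<A> n (\<lambda>b. \<omega> (i # b))}"
    proof (rule ccontr)
      assume "i \<notin> {i \<in> \<omega> []. \<forall>n. good \<A> n (\<lambda>b. \<omega> (i # b))}"
      then have ex: "\<exists>n. \<not> good \<A> n (\<lambda>b. \<omega> (i # b))" using i by auto
      then have "\<not> good \<A> (N' i) (\<lambda>b. \<omega> (i # b))"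
        unfolding N'_def using LeastI_ex[OF ex] by auto
      moreover have "good \<A> (N' i) (\<lambda>b. \<omega> (i # b))"
        using good_mono_le[OF le] i by blast
      ultimately show False by contradiction
    qed
  qed
  have "good \<A> (Suc N) \<omega>" using all by blast
  then have "{i \<in> \<omega> []. good \<A> N (\<lambda>b. \<omega> (i # b))} \<in> upclosure \<A>" by simp
  then show ?thesis using upclosure_mono sub by blast
qed

lemma good_all_subtree:
  fixes \<omega> :: "'a::finite list \<Rightarrow> 'a set"
  assumes all: "\<forall>n. good \<A> n \<omega>"
  shows "\<exists>S. is_subtree_in \<A> S (gw_tree \<omega>)"
proof -
  define G where "G a = (\<forall>n. good \<A> n (\<lambda>b. \<omega> (a @ b)))" for a
  define C where "C a = (if G a then (SOME X. X \<in> \<A> \<and> X \<subseteq> {i \<in> \<omega> a. G (a @ [i])}) else {})" for a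
  have Cprop: "C a \<in> \<A> \<and> C a \<subseteq> {i \<in> \<omega> a. G (a @ [i])}" if "G a" for a
  proof -
    have "{i \<in> (\<lambda>b. \<omega> (a @ b)) []. \<forall>n. good \<A> n (\<lambda>b. (\<lambda>b. \<omega> (a @ b)) (i # b))} \<in> upclosure \<A>"
      by (rule good_all_step) (use that in \<open>simp add: G_def\<close>)
    then have "{i \<in> \<omega> a. G (a @ [i])} \<in> upclosure \<A>" by (simp add: G_def)
    then have "\<exists>X. X \<in> \<A> \<and> X \<subseteq> {i \<in> \<omega> a. G (a @ [i])}" unfolding upclosure_def by blast
    then have "(SOME X. X \<in> \<A> \<and> X \<subseteq> {i \<in> \<omega> a. G (a @ [i])}) \<in> \<A> \<and>
        (SOME X. X \<in> \<A> \<and> X \<subseteq> {i \<in> \<omega> a. G (a @ [i])}) \<subseteq> {i \<in> \<omega> a. G (a @ [i])}"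
      by (rule someI_ex)
    then show ?thesis unfolding C_def using that by simp
  qed
  have Csub: "C a \<subseteq> \<omega> a" for a
  proof (cases "G a")
    case True then show ?thesis using Cprop[of a] by auto
  next
    case False then show ?thesis by (simp add: C_def)
  qed
  define S where "S = gw_tree C"
  have SG: "a \<in> S \<Longrightarrow> G a" for a
  proof (induction a rule: rev_induct)
    case Nil then show ?case using all by (simp add: G_def)
  next
    case (snoc i a)
    have ai: "a @ [i] \<in> gw_tree C" using snoc.prems unfolding S_def .
    have a: "a \<in> S" unfolding S_def by (rule gw_tree_snocD(1)[OF ai])
    have i: "i \<in> C a" by (rule gw_tree_snocD(2)[OF ai])
    have "G a" using snoc.IH[OF a] .
    then have "C a \<subseteq> {i \<in> \<omega> a. G (a @ [i])}" using Cprop[of a] by simp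
    then show ?case using i by auto
  qed
  have "is_subtree_in \<A> S (gw_tree \<omega>)"
    unfolding is_subtree_in_def
  proof (intro conjI ballI)
    show "is_tree S" unfolding S_def by (rule gw_tree_is_tree)
    show "S \<subseteq> gw_tree \<omega>"
    proof
      fix w assume "w \<in> S"
      then have "\<forall>k<length w. w!k \<in> C (take k w)" unfolding S_def gw_tree_iff .
      then have "\<forall>k<length w. w!k \<in> \<omega> (take k w)" using Csub by blast
      then show "w \<in> gw_tree \<omega>" unfolding gw_tree_iff .
    qed
    fix a assume a: "a \<in> S"
    have "children S a = C a"
      using a gw_tree_snoc[of a C] unfolding children_def S_def by simp
    then show "children S a \<in> \<A>" using Cprop[OF SG[OF a]] by simp
  qed
  then show ?thesis by blast
qed

lemma subtree_iff_good:
  fixes \<omega> :: "'a::finite list \<Rightarrow> 'a set"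
  shows "(\<exists>S. is_subtree_in \<A> S (gw_tree \<omega>)) \<longleftrightarrow> (\<forall>n. good \<A> n \<omega>)"
proof
  assume "\<exists>S. is_subtree_in \<A> S (gw_tree \<omega>)"
  then obtain S where S: "is_subtree_in \<A> S (gw_tree \<omega>)" by blast
  have "[] \<in> S" using S unfolding is_subtree_in_def is_tree_def by blast
  from subtree_good[OF S this] show "\<forall>n. good \<A> n \<omega>" by simp
qed (rule good_all_subtree)


definition Lw :: "nat \<Rightarrow> 'a list set" where "Lw n = {w. length w < n}"

definition Pn :: "'a set pmf \<Rightarrow> nat \<Rightarrow> ('a list \<Rightarrow> 'a set) pmf" where
  "Pn W n = Pi_pmf (Lw n) {} (\<lambda>_. W)"

definition comb :: "'a set \<times> ('a \<Rightarrow> 'a list \<Rightarrow> 'a set) \<Rightarrow> 'a list \<Rightarrow> 'a set" where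
  "comb z = (\<lambda>w. case w of [] \<Rightarrow> fst z | i # b \<Rightarrow> snd z i b)"

lemma finite_Lw: "finite (Lw n :: 'a::finite list set)"
proof -
  have "Lw n \<subseteq> {xs :: 'a list. set xs \<subseteq> UNIV \<and> length xs \<le> n}" unfolding Lw_def by auto
  moreover have "finite {xs :: 'a list. set xs \<subseteq> UNIV \<and> length xs \<le> n}"
    by (rule finite_lists_length_le) simp
  ultimately show ?thesis by (rule finite_subset)
qed

lemma Lw_Suc: "Lw (Suc n) = insert [] ((\<lambda>(i,b). i # b) ` (UNIV \<times> Lw n))"
proof (intro set_eqI iffI)
  fix w :: "'a list" assume "w \<in> Lw (Suc n)"
  then show "w \<in> insert [] ((\<lambda>(i,b). i # b) ` (UNIV \<times> Lw n))"
    by (cases w) (auto simp: Lw_def)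
qed (auto simp: Lw_def)

lemma comb_inj: "inj comb"
proof (rule injI)
  fix x y :: "'a set \<times> ('a \<Rightarrow> 'a list \<Rightarrow> 'a set)" assume e: "comb x = comb y"
  have 1: "fst x = fst y" using fun_cong[OF e, of "[]"] by (simp add: comb_def)
  have "snd x i b = snd y i b" for i b using fun_cong[OF e, of "i # b"] by (simp add: comb_def)
  then have 2: "snd x = snd y" by (intro ext)
  show "x = y" using 1 2 by (simp add: prod_eq_iff)
qed

lemma comb_dec: "comb (g [], \<lambda>i b. g (i # b)) = g"
  by (rule ext) (simp add: comb_def split: list.splits)

lemma Pn_Suc:
  fixes W :: "'a::finite set pmf"
  shows "Pn W (Suc n) = map_pmf comb (pair_pmf W (Pi_pmf UNIV (\<lambda>_. {}) (\<lambda>_. Pn W n)))"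
proof (rule pmf_eqI)
  fix g :: "'a list \<Rightarrow> 'a set"
  have "pmf (map_pmf comb (pair_pmf W (Pi_pmf UNIV (\<lambda>_. {}) (\<lambda>_. Pn W n)))) g
      = pmf (map_pmf comb (pair_pmf W (Pi_pmf UNIV (\<lambda>_. {}) (\<lambda>_. Pn W n)))) (comb (g [], \<lambda>i b. g (i # b)))"
    by (simp add: comb_dec)
  also have "\<dots> = pmf W (g []) * (\<Prod>i\<in>UNIV. pmf (Pn W n) (\<lambda>b. g (i # b)))"
    by (subst pmf_map_inj'[OF comb_inj]) (simp add: pmf_pair pmf_Pi)
  also have "\<dots> = pmf W (g []) * (\<Prod>i\<in>UNIV.
        (if (\<forall>b. b \<notin> Lw n \<longrightarrow> g (i # b) = {}) then \<Prod>b\<in>Lw n. pmf W (g (i # b)) else 0))"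
    by (simp add: Pn_def pmf_Pi finite_Lw)
  also have "\<dots> = pmf (Pn W (Suc n)) g"
  proof (cases "\<forall>w. w \<notin> Lw (Suc n) \<longrightarrow> g w = {}")
    case True
    then have c: "\<forall>b. b \<notin> Lw n \<longrightarrow> g (i # b) = {}" for i by (simp add: Lw_def)
    have "pmf (Pn W (Suc n)) g = (\<Prod>w\<in>Lw (Suc n). pmf W (g w))"
      using True by (simp add: Pn_def pmf_Pi finite_Lw)
    also have "\<dots> = pmf W (g []) * (\<Prod>w\<in>(\<lambda>(i,b). i # b) ` (UNIV \<times> Lw n). pmf W (g w))"
      unfolding Lw_Suc by (subst prod.insert) (auto simp: finite_Lw)
    also have "(\<Prod>w\<in>(\<lambda>(i,b). i # b) ` (UNIV \<times> Lw n). pmf W (g w)) =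
        (\<Prod>z\<in>UNIV \<times> Lw n. pmf W (g (fst z # snd z)))"
      by (subst prod.reindex) (auto simp: inj_on_def case_prod_beta)
    also have "\<dots> = (\<Prod>i\<in>UNIV. \<Prod>b\<in>Lw n. pmf W (g (i # b)))"
      unfolding prod.cartesian_product by (simp add: case_prod_beta)
    finally show ?thesis using c by simp
  next
    case False
    then obtain w where w: "w \<notin> Lw (Suc n)" "g w \<noteq> {}" by blast
    then obtain i b where ib: "w = i # b" by (cases w) (auto simp: Lw_def)
    then have b: "b \<notin> Lw n" using w by (simp add: Lw_def)
    have "pmf (Pn W (Suc n)) g = 0"
      using w unfolding Pn_def by (subst pmf_Pi) (auto simp: finite_Lw)
    moreover have "(\<Prod>i\<in>UNIV.
        (if (\<forall>b. b \<notin> Lw n \<longrightarrow> g (i # b) = {}) then \<Prod>b\<in>Lw n. pmf W (g (i # b)) else 0)) = 0"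
      using b w ib by (intro prod_zero) (auto intro!: bexI[of _ i])
    ultimately show ?thesis by simp
  qed
  finally show "pmf (Pn W (Suc n)) g = pmf (map_pmf comb (pair_pmf W (Pi_pmf UNIV (\<lambda>_. {}) (\<lambda>_. Pn W n)))) g"
    by simp
qed


definition qn :: "'a set pmf \<Rightarrow> 'a set set \<Rightarrow> nat \<Rightarrow> real" where
  "qn W \<A> n = measure_pmf.prob (Pn W n) {f. \<not> good \<A> n f}"

definition Bs :: "real \<Rightarrow> ('a::finite \<Rightarrow> bool) pmf" where
  "Bs s = Pi_pmf UNIV False (\<lambda>_. bernoulli_pmf (1 - s))"

definition Ebad :: "'a set set \<Rightarrow> ('a set \<times> ('a \<Rightarrow> bool)) set" where
  "Ebad \<A> = {z. {i \<in> fst z. snd z i} \<notin> upclosure \<A>}"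

lemma bin_subset_UNIV: "bin_subset (UNIV::'a::finite set) p = map_pmf (\<lambda>f. {i. f i}) (Pi_pmf UNIV False (\<lambda>_. bernoulli_pmf p))"
  unfolding bin_subset_def by simp

lemma thinned_alt:
  fixes W :: "'a::finite set pmf"
  shows "thinned W s = map_pmf (\<lambda>z. {i \<in> fst z. snd z i}) (pair_pmf W (Bs s))"
  unfolding thinned_def bin_subset_UNIV Bs_def pair_pmf_def
  by (simp add: map_bind_pmf bind_map_pmf bind_return_pmf map_pmf_def[symmetric] bind_assoc_pmf
      Int_def pmf.map_comp o_def)

lemma g_alt:
  fixes W :: "'a::finite set pmf"
  shows "g_fun W \<A> s = measure_pmf.prob (pair_pmf W (Bs s)) (Ebad \<A>)"
  unfolding g_fun_def thinned_alt Ebad_def by (simp add: vimage_def)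

lemma good_comb: "good \<A> (Suc n) (comb (x, F)) = ({i \<in> x. good \<A> n (F i)} \<in> upclosure \<A>)"
  by (simp add: comb_def)

lemma bool_pmf_bernoulli: "(p :: bool pmf) = bernoulli_pmf (pmf p True)"
proof (rule pmf_eqI)
  fix b :: bool
  have "0 \<le> pmf p True" "pmf p True \<le> 1" by (simp_all add: pmf_le_1)
  then show "pmf p b = pmf (bernoulli_pmf (pmf p True)) b"
    by (cases b) (simp_all add: pmf_False_conv_True)
qed

lemma Pi_UNIV_dflt: "Pi_pmf (UNIV :: 'a::finite set) d p = Pi_pmf UNIV d' p"
  by (rule pmf_eqI) (simp add: pmf_Pi)

lemma map_good_Pn:
  fixes W :: "'a::finite set pmf"
  shows "map_pmf (good \<A> n) (Pn W n) = bernoulli_pmf (1 - qn W \<A> n)"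
proof -
  have "pmf (map_pmf (good \<A> n) (Pn W n)) True = measure_pmf.prob (Pn W n) {f. good \<A> n f}"
    by (simp add: pmf_map vimage_def)
  also have "\<dots> = 1 - qn W \<A> n"
  proof -
    have "{f. good \<A> n f} = UNIV - {f. \<not> good \<A> n f}" by auto
    then show ?thesis unfolding qn_def by (simp only:) (subst measure_pmf.prob_compl[symmetric], auto)
  qed
  finally show ?thesis by (subst bool_pmf_bernoulli) simp
qed

lemma qn_Suc:
  fixes W :: "'a::finite set pmf"
  shows "qn W \<A> (Suc n) = g_fun W \<A> (qn W \<A> n)"
proof -
  define Q where "Q = Pi_pmf (UNIV::'a set) (\<lambda>_. {}) (\<lambda>_. Pn W n)"
  define h where "h = (\<lambda>(x::'a set, F::'a \<Rightarrow> 'a list \<Rightarrow> 'a set). (x, \<lambda>i. good \<A> n (F i)))"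
  have "qn W \<A> (Suc n) = measure_pmf.prob (pair_pmf W Q) (comb -` {f. \<not> good \<A> (Suc n) f})"
    unfolding qn_def Pn_Suc Q_def by simp
  also have "comb -` {f. \<not> good \<A> (Suc n) f} = h -` Ebad \<A>"
    by (auto simp: h_def Ebad_def comb_def)
  also have "measure_pmf.prob (pair_pmf W Q) (h -` Ebad \<A>) = measure_pmf.prob (map_pmf h (pair_pmf W Q)) (Ebad \<A>)"
    by simp
  also have "map_pmf h (pair_pmf W Q) = pair_pmf W (map_pmf (\<lambda>F i. good \<A> n (F i)) Q)"
    unfolding h_def using map_pair[of "\<lambda>x. x" "\<lambda>F i. good \<A> n (F i)" W Q]
    by simp
  also have "map_pmf (\<lambda>F i. good \<A> n (F i)) Q = Pi_pmf UNIV (good \<A> n (\<lambda>_. {})) (\<lambda>_. map_pmf (good \<A> n) (Pn W n))"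
  proof -
    have e: "(\<lambda>F i. good \<A> n (F i)) = (\<lambda>F. good \<A> n \<circ> F)" by (simp add: o_def)
    show ?thesis unfolding Q_def e by (subst Pi_pmf_map) simp_all
  qed
  also have "\<dots> = Bs (qn W \<A> n)"
    unfolding Bs_def map_good_Pn by (rule Pi_UNIV_dflt)
  finally show ?thesis by (simp add: g_alt)
qed

lemma qn_0: "qn W \<A> 0 = 0"
  unfolding qn_def by simp


lemma pmf_Bs: "0 \<le> s \<Longrightarrow> s \<le> 1 \<Longrightarrow> pmf (Bs s) f = (\<Prod>i\<in>UNIV. if f i then 1 - s else s)"
  unfolding Bs_def by (subst pmf_Pi) (auto intro!: prod.cong)

lemma finite_any: "finite (A :: 'b::finite set)"
  by (rule finite_subset[OF subset_UNIV]) simp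

lemma g_sum:
  fixes W :: "'a::finite set pmf"
  assumes "0 \<le> s" "s \<le> 1"
  shows "g_fun W \<A> s = (\<Sum>z\<in>Ebad \<A>. pmf W (fst z) * (\<Prod>i\<in>UNIV. if snd z i then 1 - s else s))"
proof -
  have "g_fun W \<A> s = (\<Sum>z\<in>Ebad \<A>. pmf (pair_pmf W (Bs s)) z)"
    unfolding g_alt by (rule measure_measure_pmf_finite[OF finite_any])
  also have "\<dots> = (\<Sum>z\<in>Ebad \<A>. pmf W (fst z) * (\<Prod>i\<in>UNIV. if snd z i then 1 - s else s))"
  proof (rule sum.cong)
    fix z :: "'a set \<times> ('a \<Rightarrow> bool)"
    show "pmf (pair_pmf W (Bs s)) z = pmf W (fst z) * (\<Prod>i\<in>UNIV. if snd z i then 1 - s else s)"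
      using assms by (cases z) (simp add: pmf_pair pmf_Bs)
  qed simp
  finally show ?thesis .
qed

lemma g_cont:
  fixes W :: "'a::finite set pmf"
  shows "continuous_on {0..1} (g_fun W \<A>)"
proof -
  have c: "continuous_on {0..1} (\<lambda>s::real. if b then 1 - s else s)" for b
    by (cases b) (simp_all add: continuous_on_diff continuous_on_id continuous_on_const)
  have "continuous_on {0..1} (\<lambda>s. \<Sum>z\<in>Ebad \<A>. pmf W (fst z) * (\<Prod>i\<in>UNIV. if snd z i then 1 - s else s))"
    by (intro continuous_on_sum continuous_on_mult continuous_on_prod continuous_on_const c)
  then show ?thesis
    by (rule continuous_on_cong[THEN iffD1, rotated 2]) (auto simp: g_sum)
qed

lemma g_range:
  fixes W :: "'a::finite set pmf"
  shows "0 \<le> g_fun W \<A> s \<and> g_fun W \<A> s \<le> 1"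
  unfolding g_fun_def by simp

lemma bern_couple:
  assumes "0 \<le> s" "s \<le> t" "t \<le> 1"
  defines "r \<equiv> (if t = 0 then 0 else (t - s) / t)"
  shows "bind_pmf (bernoulli_pmf (1 - t)) (\<lambda>a. map_pmf (\<lambda>b. a \<or> b) (bernoulli_pmf r)) = bernoulli_pmf (1 - s)"
proof -
  have r: "0 \<le> r" "r \<le> 1" using assms by (auto simp: r_def field_simps)
  have rt: "r * t = t - s" using assms by (auto simp: r_def)
  have m1: "map_pmf (\<lambda>b. True \<or> b) (bernoulli_pmf r) = return_pmf True" by (simp add: map_pmf_const)
  have m2: "map_pmf (\<lambda>b. False \<or> b) (bernoulli_pmf r) = bernoulli_pmf r" by simp
  show ?thesis
  proof (rule pmf_eqI)
    fix x :: bool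
    have "pmf (bind_pmf (bernoulli_pmf (1 - t)) (\<lambda>a. map_pmf (\<lambda>b. a \<or> b) (bernoulli_pmf r))) x
        = pmf (return_pmf True) x * (1 - t) + pmf (bernoulli_pmf r) x * (1 - (1 - t))"
      unfolding pmf_bind using assms(1-3) by (subst integral_bernoulli_pmf) (simp_all add: m1 m2)
    also have "\<dots> = pmf (bernoulli_pmf (1 - s)) x"
      using assms r rt by (cases x) (simp_all add: algebra_simps)
    finally show "pmf (bind_pmf (bernoulli_pmf (1 - t)) (\<lambda>a. map_pmf (\<lambda>b. a \<or> b) (bernoulli_pmf r))) x
        = pmf (bernoulli_pmf (1 - s)) x" .
  qed
qed

lemma g_mono:
  fixes W :: "'a::finite set pmf"
  assumes "0 \<le> s" "s \<le> t" "t \<le> 1"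
  shows "g_fun W \<A> s \<le> g_fun W \<A> t"
proof -
  define r where "r = (if t = 0 then 0 else (t - s) / t)"
  define R where "R = (\<lambda>f::'a \<Rightarrow> bool. Pi_pmf UNIV False (\<lambda>x. map_pmf (\<lambda>b. f x \<or> b) (bernoulli_pmf r)))"
  have BsR: "Bs s = bind_pmf (Bs t) R"
  proof -
    have "Bs s = Pi_pmf UNIV False (\<lambda>x::'a. bind_pmf (bernoulli_pmf (1 - t)) (\<lambda>a. map_pmf (\<lambda>b. a \<or> b) (bernoulli_pmf r)))"
      unfolding Bs_def r_def using bern_couple[OF assms] by simp
    also have "\<dots> = bind_pmf (Bs t) R"
      unfolding Bs_def R_def by (subst Pi_pmf_bind[where d' = False]) simp_all
    finally show ?thesis .
  qed
  define K where "K = bind_pmf W (\<lambda>X. bind_pmf (Bs t) (\<lambda>f. bind_pmf (R f) (\<lambda>g. return_pmf ((X, g), (X, f)))))"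
  have Kfst: "map_pmf fst K = pair_pmf W (Bs s)"
    unfolding K_def BsR pair_pmf_def by (simp add: map_bind_pmf bind_assoc_pmf)
  have Ksnd: "map_pmf snd K = pair_pmf W (Bs t)"
    unfolding K_def pair_pmf_def by (simp add: map_bind_pmf bind_assoc_pmf)
  have supp: "fst (fst z) = fst (snd z) \<and> (\<forall>i. snd (snd z) i \<longrightarrow> snd (fst z) i)" if "z \<in> set_pmf K" for z
  proof -
    from that obtain X f g where z: "z = ((X, g), (X, f))" and g: "g \<in> set_pmf (R f)"
      unfolding K_def by auto
    have "g \<in> PiE_dflt UNIV False (set_pmf \<circ> (\<lambda>x. map_pmf (\<lambda>b. f x \<or> b) (bernoulli_pmf r)))"
      using g unfolding R_def by (simp add: set_Pi_pmf)
    then have "\<forall>i. f i \<longrightarrow> g i" by (auto simp: PiE_dflt_def)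
    then show ?thesis using z by simp
  qed
  have sub: "fst -` Ebad \<A> \<inter> set_pmf K \<subseteq> snd -` Ebad \<A>"
  proof
    fix z assume z: "z \<in> fst -` Ebad \<A> \<inter> set_pmf K"
    then have s1: "fst (fst z) = fst (snd z)" and s2: "\<forall>i. snd (snd z) i \<longrightarrow> snd (fst z) i"
      using supp by blast+
    have sub2: "{i \<in> fst (snd z). snd (snd z) i} \<subseteq> {i \<in> fst (fst z). snd (fst z) i}"
      using s1 s2 by auto
    have "{i \<in> fst (fst z). snd (fst z) i} \<notin> upclosure \<A>" using z by (simp add: Ebad_def)
    then have "{i \<in> fst (snd z). snd (snd z) i} \<notin> upclosure \<A>" using upclosure_mono sub2 by blast
    then show "z \<in> snd -` Ebad \<A>" by (simp add: Ebad_def)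
  qed
  have "g_fun W \<A> s = measure_pmf.prob K (fst -` Ebad \<A>)"
    unfolding g_alt Kfst[symmetric] by simp
  also have "\<dots> = measure_pmf.prob K (fst -` Ebad \<A> \<inter> set_pmf K)"
    by (simp add: measure_Int_set_pmf)
  also have "\<dots> \<le> measure_pmf.prob K (snd -` Ebad \<A>)"
    by (rule measure_pmf.finite_measure_mono[OF sub]) simp
  also have "\<dots> = g_fun W \<A> t"
    unfolding g_alt Ksnd[symmetric] by simp
  finally show ?thesis .
qed


lemma gw_prob_space: "prob_space (gw_space W)"
  unfolding gw_space_def by (rule prob_space_PiM) (simp add: measure_pmf.prob_space_axioms)

lemma space_gw: "space (gw_space W) = UNIV"
  unfolding gw_space_def by (simp add: space_PiM)

lemma Pn_distr:
  fixes W :: "'a::finite set pmf"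
  shows "distr (measure_pmf (Pn W n)) (PiM (Lw n) (\<lambda>_. measure_pmf W)) (\<lambda>f. restrict f (Lw n))
         = PiM (Lw n) (\<lambda>_. measure_pmf W)"
proof -
  interpret PP: product_prob_space "\<lambda>_::'a list. measure_pmf W" "UNIV"
    by (rule product_prob_spaceI) (simp add: measure_pmf.prob_space_axioms)
  show ?thesis
  proof (rule PP.PiM_eqI)
    show "finite (Lw n :: 'a list set)" by (rule finite_Lw)
    show "sets (distr (measure_pmf (Pn W n)) (PiM (Lw n) (\<lambda>_. measure_pmf W)) (\<lambda>f. restrict f (Lw n)))
        = sets (PiM (Lw n) (\<lambda>_. measure_pmf W))" by simp
    fix A :: "'a list \<Rightarrow> 'a set set"
    assume A: "\<And>i. i \<in> Lw n \<Longrightarrow> A i \<in> sets (measure_pmf W)"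
    have "Pi\<^sub>E (Lw n) A \<in> sets (PiM (Lw n) (\<lambda>_. measure_pmf W))"
      by (intro sets_PiM_I_finite finite_Lw) simp
    then have "emeasure (distr (measure_pmf (Pn W n)) (PiM (Lw n) (\<lambda>_. measure_pmf W)) (\<lambda>f. restrict f (Lw n))) (Pi\<^sub>E (Lw n) A)
        = emeasure (measure_pmf (Pn W n)) ((\<lambda>f. restrict f (Lw n)) -` Pi\<^sub>E (Lw n) A)"
      by (subst emeasure_distr) (auto simp: space_PiM)
    also have "\<dots> = emeasure (measure_pmf (Pn W n)) (PiE_dflt (Lw n) {} A)"
      unfolding Pn_def by (intro emeasure_eq_AE AE_pmfI) (auto simp: PiE_dflt_def set_Pi_pmf finite_Lw)
    also have "\<dots> = (\<Prod>i\<in>Lw n. emeasure (measure_pmf W) (A i))"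
      unfolding Pn_def
      by (simp add: measure_pmf.emeasure_eq_measure measure_Pi_pmf_PiE_dflt finite_Lw prod_ennreal)
    finally show "emeasure (distr (measure_pmf (Pn W n)) (PiM (Lw n) (\<lambda>_. measure_pmf W)) (\<lambda>f. restrict f (Lw n))) (Pi\<^sub>E (Lw n) A)
        = (\<Prod>i\<in>Lw n. emeasure (measure_pmf W) (A i))" .
  qed
qed

lemma good_restrict: "good \<A> n (restrict \<omega> (Lw n)) = good \<A> n \<omega>"
  by (rule good_local) (simp add: Lw_def)

lemma gw_good:
  fixes W :: "'a::finite set pmf"
  shows "{\<omega> \<in> space (gw_space W). good \<A> n \<omega>} \<in> sets (gw_space W)"
    and "emeasure (gw_space W) {\<omega> \<in> space (gw_space W). good \<A> n \<omega>}
         = emeasure (measure_pmf (Pn W n)) {f. good \<A> n f}"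
proof -
  interpret PP: product_prob_space "\<lambda>_::'a list. measure_pmf W" "UNIV"
    by (rule product_prob_spaceI) (simp add: measure_pmf.prob_space_axioms)
  define J where "J = (Lw n :: 'a list set)"
  define X where "X = {f \<in> space (PiM J (\<lambda>_. measure_pmf W)). good \<A> n f}"
  have finJ: "finite J" unfolding J_def by (rule finite_Lw)
  have X: "X \<in> sets (PiM J (\<lambda>_. measure_pmf W))"
  proof (rule sets.countable)
    fix a assume "a \<in> X"
    then have a: "a \<in> PiE J (\<lambda>_. UNIV)" unfolding X_def by (simp add: space_PiM)
    have xa: "x = a" if "x \<in> PiE J (\<lambda>i. {a i})" for x
    proof (rule ext)
      fix i show "x i = a i" using that a by (cases "i \<in> J") (auto simp: PiE_iff extensional_def)
    qed
    have "a \<in> PiE J (\<lambda>i. {a i})" using a by (auto simp: PiE_iff)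
    then have "{a} = PiE J (\<lambda>i. {a i})" using xa by blast
    also have "\<dots> \<in> sets (PiM J (\<lambda>_. measure_pmf W))"
      by (intro sets_PiM_I_finite finJ) simp
    finally show "{a} \<in> sets (PiM J (\<lambda>_. measure_pmf W))" .
  next
    have "countable (PiE J (\<lambda>_. UNIV :: 'a set set))"
      by (intro countable_PiE finJ countable_finite finite_any)
    moreover have "X \<subseteq> PiE J (\<lambda>_. UNIV :: 'a set set)" unfolding X_def by (simp add: space_PiM)
    ultimately show "countable X" by (rule countable_subset[rotated])
  qed
  have emb: "prod_emb UNIV (\<lambda>_. measure_pmf W) J X = {\<omega> \<in> space (gw_space W). good \<A> n \<omega>}"
    unfolding prod_emb_def X_def J_def gw_space_def
    by (auto simp: space_PiM good_restrict)
  have m: "prod_emb UNIV (\<lambda>_. measure_pmf W) J X \<in> sets (gw_space W)"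
    unfolding gw_space_def by (rule measurable_prod_emb[OF _ X]) simp
  then show "{\<omega> \<in> space (gw_space W). good \<A> n \<omega>} \<in> sets (gw_space W)"
    unfolding emb .
  have e1: "emeasure (gw_space W) (prod_emb UNIV (\<lambda>_. measure_pmf W) J X)
      = emeasure (PiM J (\<lambda>_. measure_pmf W)) X"
    unfolding gw_space_def by (rule PP.emeasure_PiM_emb'[OF _ finJ X]) simp
  have "emeasure (gw_space W) {\<omega> \<in> space (gw_space W). good \<A> n \<omega>}
      = emeasure (PiM J (\<lambda>_. measure_pmf W)) X"
    using e1 unfolding emb .
  also have "\<dots> = emeasure (distr (measure_pmf (Pn W n)) (PiM J (\<lambda>_. measure_pmf W)) (\<lambda>f. restrict f J)) X"
    unfolding J_def Pn_distr ..
  also have "\<dots> = emeasure (measure_pmf (Pn W n)) ((\<lambda>f. restrict f J) -` X)"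
    using X by (subst emeasure_distr) (auto simp: space_PiM)
  also have "(\<lambda>f. restrict f J) -` X = {f. good \<A> n f}"
    unfolding X_def J_def by (auto simp: space_PiM good_restrict)
  finally show "emeasure (gw_space W) {\<omega> \<in> space (gw_space W). good \<A> n \<omega>}
         = emeasure (measure_pmf (Pn W n)) {f. good \<A> n f}" .
qed

lemma gw_good_measure:
  fixes W :: "'a::finite set pmf"
  shows "measure (gw_space W) {\<omega> \<in> space (gw_space W). good \<A> n \<omega>} = 1 - qn W \<A> n"
proof -
  have "measure (gw_space W) {\<omega> \<in> space (gw_space W). good \<A> n \<omega>}
      = measure_pmf.prob (Pn W n) {f. good \<A> n f}"
    unfolding measure_def gw_good(2) ..
  also have "\<dots> = 1 - qn W \<A> n"
  proof -
    have "{f. good \<A> n f} = UNIV - {f. \<not> good \<A> n f}" by auto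
    then show ?thesis unfolding qn_def by (simp only:) (subst measure_pmf.prob_compl[symmetric], auto)
  qed
  finally show ?thesis .
qed

lemma tau_lim:
  fixes W :: "'a::finite set pmf"
  shows "(\<lambda>n. 1 - qn W \<A> n) \<longlonglongrightarrow> tau W \<A>"
proof -
  interpret P: prob_space "gw_space W" by (rule gw_prob_space)
  define E where "E n = {\<omega> \<in> space (gw_space W). good \<A> n \<omega>}" for n
  have "range E \<subseteq> sets (gw_space W)" unfolding E_def using gw_good(1) by blast
  moreover have "decseq E"
    unfolding decseq_Suc_iff E_def using good_Suc_imp by blast
  ultimately have "(\<lambda>n. measure (gw_space W) (E n)) \<longlonglongrightarrow> measure (gw_space W) (\<Inter>n. E n)"
    by (rule P.finite_Lim_measure_decseq)
  moreover have "(\<Inter>n. E n) = {\<omega> \<in> space (gw_space W). \<exists>S. is_subtree_in \<A> S (gw_tree \<omega>)}"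
    unfolding E_def subtree_iff_good by auto
  ultimately show ?thesis
    unfolding tau_def E_def gw_good_measure by simp
qed

lemma qn_range: "0 \<le> qn W \<A> n \<and> qn W \<A> n \<le> 1"
  unfolding qn_def by simp

theorem theorem2p10:
  fixes W :: "'a::finite set pmf" and \<A> :: "'a set set"
  assumes "\<And>i. measure_pmf.prob W {X. i \<in> X} > 0"
    and "\<A> \<noteq> {}" and "\<forall>X\<in>\<A>. X \<noteq> {}"
  shows "0 \<le> 1 - tau W \<A> \<and> 1 - tau W \<A> \<le> 1
       \<and> g_fun W \<A> (1 - tau W \<A>) = 1 - tau W \<A>
       \<and> (\<forall>s\<in>{0..1}. g_fun W \<A> s = s \<longrightarrow> 1 - tau W \<A> \<le> s)"
proof -
  interpret P: prob_space "gw_space W" by (rule gw_prob_space)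
  define q where "q = 1 - tau W \<A>"
  have lim: "(\<lambda>n. qn W \<A> n) \<longlonglongrightarrow> q"
  proof -
    have "(\<lambda>n. 1 - (1 - qn W \<A> n)) \<longlonglongrightarrow> 1 - tau W \<A>"
      by (intro tendsto_diff tendsto_const tau_lim)
    then show ?thesis unfolding q_def by simp
  qed
  have t01: "0 \<le> tau W \<A>" "tau W \<A> \<le> 1" unfolding tau_def by simp_all
  then have q01: "q \<in> {0..1}" unfolding q_def by simp
  have fixq: "g_fun W \<A> q = q"
  proof -
    have "(\<lambda>n. g_fun W \<A> (qn W \<A> n)) \<longlonglongrightarrow> g_fun W \<A> q"
    proof -
      have ev: "\<forall>\<^sub>F n in sequentially. qn W \<A> n \<in> {0..1}" using qn_range by (intro always_eventually) auto
      show ?thesis using continuous_on_tendsto_compose[OF g_cont[where W=W and \<A>=\<A>] lim q01 ev] by (simp add: o_def)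
    qed
    moreover have "(\<lambda>n. g_fun W \<A> (qn W \<A> n)) \<longlonglongrightarrow> q"
      using LIMSEQ_Suc[OF lim] by (simp add: qn_Suc)
    ultimately show ?thesis by (rule LIMSEQ_unique)
  qed
  have minimal: "q \<le> s" if s: "s \<in> {0..1}" "g_fun W \<A> s = s" for s
  proof -
    have le: "qn W \<A> n \<le> s" for n
    proof (induction n)
      case 0 then show ?case using s by (simp add: qn_0)
    next
      case (Suc n)
      have "qn W \<A> (Suc n) = g_fun W \<A> (qn W \<A> n)" by (rule qn_Suc)
      also have "\<dots> \<le> g_fun W \<A> s"
        using qn_range Suc.IH s by (intro g_mono) auto
      finally show ?case using s by simp
    qed
    show ?thesis using lim le by (intro LIMSEQ_le_const2) auto
  qed
  show ?thesis using q01 fixq minimal unfolding q_def by auto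
qed

end
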